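(* Let $c,k>0$ and let $U$ be a function assignment for $\mathbb{N}^k$. Suppose that for every $p>0$ there exist a finite $A\subseteq\mathbb{N}^k$ and $E\subseteq\mathbb{N}$ with $|E|=p$ and $E^k\subseteq A$ such that $U(A)$ has at most $c$ regressive values on $E^k$. Then for every $p>0$ there exist a finite $A\subseteq\mathbb{N}^k$ and $E\subseteq\mathbb{N}$ with $|E|=p$ and $E^k\subseteq A$ such that $U(A)$ has at most $\mathrm{ot}(k)$ regressive values on $E^k$ (in particular at most $k^k$).
   Context: $\mathbb{N}=\{0,1,\dots\}$; for $x\in\mathbb{N}^k$, $\min(x)$ and $|x|$ are its least and greatest coordinates. A function assignment for $\mathbb{N}^k$ assigns to each finite $A\subseteq\mathbb{N}^k$ a function $U(A):A\to A$. $y$ is a regressive value of $F$ on $B$ iff $y=F(x)$ for some $x\in B$ with $|y|<\min(x)$. $x,y\in\mathbb{N}^k$ have the same order type iff $x_i<x_j\Leftrightarrow y_i<y_j$ for all $i,j$; $\mathrm{ot}(k)$ is the number of order types of elements of $\mathbb{N}^k$ (and $\mathrm{ot}(k)\le k^k$). *)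

theory Defs
  imports Main
begin

text \<open>Elements of N^k are represented as lists of naturals of length k.\<close>

definition tuples :: "nat \<Rightarrow> nat list set" where
  "tuples k = {x. length x = k}"

definition cube :: "nat set \<Rightarrow> nat \<Rightarrow> nat list set" where
  "cube E k = {x. length x = k \<and> set x \<subseteq> E}"

definition minc :: "nat list \<Rightarrow> nat" where
  "minc x = Min (set x)"

definition maxc :: "nat list \<Rightarrow> nat" where
  "maxc x = Max (set x)"

definition function_assignment :: "nat \<Rightarrow> (nat list set \<Rightarrow> nat list \<Rightarrow> nat list) \<Rightarrow> bool" where
  "function_assignment k U \<longleftrightarrow>
     (\<forall>A. finite A \<and> A \<subseteq> tuples k \<longrightarrow> (\<forall>x\<in>A. U A x \<in> A))"

definition regressive_values :: "(nat list \<Rightarrow> nat list) \<Rightarrow> nat list set \<Rightarrow> nat list set" where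
  "regressive_values F B = {y. \<exists>x\<in>B. y = F x \<and> maxc y < minc x}"

definition same_ot :: "nat \<Rightarrow> nat list \<Rightarrow> nat list \<Rightarrow> bool" where
  "same_ot k x y \<longleftrightarrow> (\<forall>i<k. \<forall>j<k. x ! i < x ! j \<longleftrightarrow> y ! i < y ! j)"

definition ot :: "nat \<Rightarrow> nat" where
  "ot k = card (tuples k // {(x, y). x \<in> tuples k \<and> y \<in> tuples k \<and> same_ot k x y})"

end

theory Submission
  imports Defs "HOL-Library.Ramsey"
begin

definition rnk :: "nat set \<Rightarrow> nat \<Rightarrow> nat" where
  "rnk S v = card {w\<in>S. w < v}"

definition enm :: "nat set \<Rightarrow> nat \<Rightarrow> nat" where
  "enm S i = (THE v. v \<in> S \<and> rnk S v = i)"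

definition inst :: "nat set \<Rightarrow> nat list \<Rightarrow> nat list" where
  "inst S p = map (enm S) p"

lemma rnk_mono: "finite S \<Longrightarrow> v \<le> u \<Longrightarrow> rnk S v \<le> rnk S u"
  unfolding rnk_def by (rule card_mono) auto

lemma rnk_strict: "finite S \<Longrightarrow> v \<in> S \<Longrightarrow> v < u \<Longrightarrow> rnk S v < rnk S u"
  unfolding rnk_def by (rule psubset_card_mono) auto

lemma rnk_lt: "finite S \<Longrightarrow> v \<in> S \<Longrightarrow> rnk S v < card S"
  unfolding rnk_def by (rule psubset_card_mono) auto

lemma rnk_inj: "finite S \<Longrightarrow> v \<in> S \<Longrightarrow> u \<in> S \<Longrightarrow> rnk S v = rnk S u \<Longrightarrow> v = u"
  by (metis linorder_neq_iff order_less_irrefl rnk_strict)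

lemma enm_rnk: "finite S \<Longrightarrow> v \<in> S \<Longrightarrow> enm S (rnk S v) = v"
  unfolding enm_def by (rule the_equality) (auto dest: rnk_inj)

lemma inst_pat: "inst (set x) (map (rnk (set x)) x) = x"
  unfolding inst_def by (simp add: map_idI enm_rnk)

lemma card_img_eq:
  assumes "\<And>j l. j \<in> J \<Longrightarrow> l \<in> J \<Longrightarrow> f j = f l \<longleftrightarrow> g j = g l"
  shows "card (f ` J) = card (g ` J)"
proof -
  define h where "h v = g (inv_into J f v)" for v
  have hf: "h (f j) = g j" if "j \<in> J" for j
  proof -
    have "inv_into J f (f j) \<in> J" "f (inv_into J f (f j)) = f j"
      using that by (auto intro: inv_into_into f_inv_into_f)
    then show ?thesis using assms that h_def by metis
  qed
  have "bij_betw h (f ` J) (g ` J)"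
    unfolding bij_betw_def inj_on_def
  proof (intro conjI ballI impI)
    fix a b assume "a \<in> f ` J" "b \<in> f ` J" "h a = h b"
    then show "a = b" using hf assms by auto
  next
    show "h ` f ` J = g ` J" using hf by (auto simp: image_image)
  qed
  then show ?thesis by (rule bij_betw_same_card)
qed

lemma set_lt_eq: "length x = k \<Longrightarrow> {w\<in>set x. w < v} = (\<lambda>j. x ! j) ` {j. j < k \<and> x ! j < v}"
  by (auto simp: in_set_conv_nth)

lemma ot_pat:
  assumes "length x = k" "length x' = k" "same_ot k x x'"
  shows "card (set x') = card (set x) \<and> map (rnk (set x')) x' = map (rnk (set x)) x"
proof -
  have eqv: "x ! j = x ! l \<longleftrightarrow> x' ! j = x' ! l" if "j < k" "l < k" for j l
    using assms(3) that unfolding same_ot_def by (metis linorder_neq_iff)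
  have c1: "card (set x') = card (set x)"
  proof -
    have "set x = (\<lambda>j. x ! j) ` {..<k}" "set x' = (\<lambda>j. x' ! j) ` {..<k}"
      using assms by (auto simp: set_conv_nth)
    then show ?thesis using card_img_eq[of "{..<k}" "\<lambda>j. x ! j" "\<lambda>j. x' ! j"] eqv by auto
  qed
  have "rnk (set x') (x' ! i) = rnk (set x) (x ! i)" if "i < k" for i
  proof -
    have J: "{j. j < k \<and> x' ! j < x' ! i} = {j. j < k \<and> x ! j < x ! i}"
      using assms(3) that unfolding same_ot_def by auto
    show ?thesis unfolding rnk_def
      using set_lt_eq[OF assms(1)] set_lt_eq[OF assms(2)] J
        card_img_eq[of "{j. j < k \<and> x ! j < x ! i}" "\<lambda>j. x ! j" "\<lambda>j. x' ! j"] eqv by auto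
  qed
  then have "map (rnk (set x')) x' = map (rnk (set x)) x"
    using assms by (intro nth_equalityI) auto
  with c1 show ?thesis by simp
qed

lemma same_pat: "length x = k \<Longrightarrow> same_ot k x (map (rnk (set x)) x)"
  unfolding same_ot_def
  by (auto simp: rnk_strict) (metis linorder_not_less rnk_mono finite_set leD)

lemma ramsey_fin:
  assumes "m > (0::nat)"
  shows "\<exists>N. \<forall>(X::'a set) f. finite X \<and> N \<le> card X \<and> (\<forall>S. f S < m) \<longrightarrow>
           (\<exists>H\<subseteq>X. card H = q \<and> (\<exists>col. \<forall>S\<in>nsets H r. f S = col))"
proof -
  obtain N :: nat where N: "partn_lst {..<N} (replicate m q) r" using ramsey_full[of "replicate m q" r] by blast
  show ?thesis
  proof (intro exI[of _ N] allI impI, elim conjE)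
    fix X :: "'a set" and f :: "'a set \<Rightarrow> nat"
    assume X: "finite X" "N \<le> card X" "\<forall>S. f S < m"
    obtain Y where Y: "Y \<subseteq> X" "card Y = N" using obtain_subset_with_card_n X(2) by metis
    have "finite Y" using Y X finite_subset by auto
    then obtain e where e0: "bij_betw e {0..<card Y} Y"
      using ex_bij_betw_nat_finite by blast
    have "{0..<card Y} = {..<N}" using Y(2) by auto
    then have e: "bij_betw e {..<N} Y" using e0 by simp
    define F where "F = (\<lambda>T. f (e ` T))"
    have "F \<in> nsets {..<N} r \<rightarrow> {..<length (replicate m q)}" using X(3) by (auto simp: F_def)
    then obtain i H0 where i: "i < length (replicate m q)" "H0 \<in> nsets {..<N} (replicate m q ! i)"
        "F ` nsets H0 r \<subseteq> {i}"
      using partn_lstE[OF N] by blast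
    then have H0: "H0 \<subseteq> {..<N}" "finite H0" "card H0 = q" by (auto simp: nsets_def)
    define H where "H = e ` H0"
    have inj: "inj_on e H0" using inj_on_subset[OF bij_betw_imp_inj_on[OF e] H0(1)] .
    show "\<exists>H\<subseteq>X. card H = q \<and> (\<exists>col. \<forall>S\<in>nsets H r. f S = col)"
    proof (intro exI[of _ H] conjI exI[of _ i])
      have "e ` H0 \<subseteq> e ` {..<N}" using H0(1) by (rule image_mono)
        then show "H \<subseteq> X" using bij_betw_imp_surj_on[OF e] Y(1) H_def by simp
      show "card H = q" using card_image[OF inj] H0 H_def by simp
      show "\<forall>S\<in>nsets H r. f S = i"
      proof
        fix S assume "S \<in> nsets H r"
        then obtain T where "T \<in> nsets H0 r" "S = e ` T" using nset_image_obtains[of S e H0 r] inj H_def by blast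
        then show "f S = i" using i(3) F_def by auto
      qed
    qed
  qed
qed

lemma ramsey_iter:
  fixes P :: "(nat \<times> nat list) set"
  assumes "finite P" "m > (0::nat)"
  shows "\<forall>q. \<exists>N. \<forall>X g. finite X \<and> N \<le> card X \<and> (\<forall>x. g x < m) \<longrightarrow>
     (\<exists>H\<subseteq>X. card H = q \<and> (\<forall>rp\<in>P. \<exists>col. \<forall>S\<in>nsets H (fst rp). g (inst S (snd rp)) = col))"
  using assms(1)
proof (induction P rule: finite_induct)
  case empty
  show ?case
  proof
    fix q show "\<exists>N. \<forall>X g. finite X \<and> N \<le> card X \<and> (\<forall>x. g x < m) \<longrightarrow>
     (\<exists>H\<subseteq>X. card H = q \<and> (\<forall>rp\<in>{}. \<exists>col. \<forall>S\<in>nsets H (fst rp). g (inst S (snd rp)) = col))"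
    proof (intro exI[of _ q] allI impI)
      fix X :: "nat set" and g :: "nat list \<Rightarrow> nat"
      assume "finite X \<and> q \<le> card X \<and> (\<forall>x. g x < m)"
      then obtain H where "H \<subseteq> X" "card H = q" by (meson obtain_subset_with_card_n)
      then show "\<exists>H\<subseteq>X. card H = q \<and> (\<forall>rp\<in>{}. \<exists>col. \<forall>S\<in>nsets H (fst rp). g (inst S (snd rp)) = col)"
        by auto
    qed
  qed
next
  case (insert rp P)
  show ?case
  proof
    fix q
    obtain N1 where N1: "\<forall>X g. finite X \<and> N1 \<le> card X \<and> (\<forall>x. g x < m) \<longrightarrow>
     (\<exists>H\<subseteq>X. card H = q \<and> (\<forall>rp\<in>P. \<exists>col. \<forall>S\<in>nsets H (fst rp). g (inst S (snd rp)) = col))"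
      using insert.IH by blast
    obtain N where N: "\<forall>(X::nat set) f. finite X \<and> N \<le> card X \<and> (\<forall>S. f S < m) \<longrightarrow>
           (\<exists>H\<subseteq>X. card H = N1 \<and> (\<exists>col. \<forall>S\<in>nsets H (fst rp). f S = col))"
      using ramsey_fin[OF assms(2), of N1 "fst rp"] by blast
    show "\<exists>N. \<forall>X g. finite X \<and> N \<le> card X \<and> (\<forall>x. g x < m) \<longrightarrow>
     (\<exists>H\<subseteq>X. card H = q \<and> (\<forall>rp\<in>insert rp P. \<exists>col. \<forall>S\<in>nsets H (fst rp). g (inst S (snd rp)) = col))"
    proof (intro exI[of _ N] allI impI)
      fix X :: "nat set" and g :: "nat list \<Rightarrow> nat"
      assume A: "finite X \<and> N \<le> card X \<and> (\<forall>x. g x < m)"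
      then obtain H1 col1 where H1: "H1 \<subseteq> X" "card H1 = N1"
          "\<forall>S\<in>nsets H1 (fst rp). g (inst S (snd rp)) = col1"
        using N[rule_format, of X "\<lambda>S. g (inst S (snd rp))"] by blast
      have "finite H1" using H1(1) A finite_subset by blast
      then obtain H where H: "H \<subseteq> H1" "card H = q"
          "\<forall>rp\<in>P. \<exists>col. \<forall>S\<in>nsets H (fst rp). g (inst S (snd rp)) = col"
        using N1[rule_format, of H1 g] H1(2) A by blast
      have "\<forall>S\<in>nsets H (fst rp). g (inst S (snd rp)) = col1" using H1(3) nsets_mono[OF H(1)] by blast
      then show "\<exists>H\<subseteq>X. card H = q \<and> (\<forall>rp\<in>insert rp P. \<exists>col. \<forall>S\<in>nsets H (fst rp). g (inst S (snd rp)) = col)"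
        using H H1 by (intro exI[of _ H]) auto
    qed
  qed
qed

theorem lemma3p12:
  fixes c k :: nat
    and U :: "nat list set \<Rightarrow> nat list \<Rightarrow> nat list"
  assumes "c > 0" and "k > 0"
    and "function_assignment k U"
    and "\<forall>p>0. \<exists>A E. finite A \<and> A \<subseteq> tuples k \<and> finite E \<and> card E = p \<and>
           cube E k \<subseteq> A \<and> card (regressive_values (U A) (cube E k)) \<le> c"
  shows "\<forall>p>0. \<exists>A E. finite A \<and> A \<subseteq> tuples k \<and> finite E \<and> card E = p \<and>
           cube E k \<subseteq> A \<and> card (regressive_values (U A) (cube E k)) \<le> ot k"
proof (intro allI impI)
  fix p :: nat assume "p > 0"
  define P where "P = {rp :: nat \<times> nat list. fst rp \<le> k \<and> length (snd rp) = k \<and> set (snd rp) \<subseteq> {..<fst rp}}"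
  have "P \<subseteq> {..k} \<times> {xs. set xs \<subseteq> {..<k} \<and> length xs = k}"
    unfolding P_def by auto
  then have finP: "finite P"
    by (rule finite_subset) (simp add: finite_lists_length_eq)
  have RI: "\<forall>q. \<exists>N. \<forall>X g. finite X \<and> N \<le> card X \<and> (\<forall>x. g x < c + 1) \<longrightarrow>
     (\<exists>H\<subseteq>X. card H = q \<and> (\<forall>rp\<in>P. \<exists>col. \<forall>S\<in>nsets H (fst rp). g (inst S (snd rp)) = col))"
    by (rule ramsey_iter[OF finP]) simp
  obtain N where N: "\<forall>X g. finite X \<and> N \<le> card X \<and> (\<forall>x. g x < c + 1) \<longrightarrow>
     (\<exists>H\<subseteq>X. card H = p \<and> (\<forall>rp\<in>P. \<exists>col. \<forall>S\<in>nsets H (fst rp). g (inst S (snd rp)) = col))"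
    using spec[OF RI, of p] by (elim exE) (rule that)
  have mp: "max N 1 > 0" by simp
  obtain A E where AE: "finite A" "A \<subseteq> tuples k" "finite E" "card E = max N 1"
     "cube E k \<subseteq> A" "card (regressive_values (U A) (cube E k)) \<le> c"
    using assms(4)[rule_format, OF mp] by (elim exE conjE) (rule that; assumption)
  define R where "R = regressive_values (U A) (cube E k)"
  have "finite (cube E k)" using finite_subset[OF AE(5) AE(1)] .
  moreover have "R \<subseteq> U A ` cube E k" unfolding R_def regressive_values_def by auto
  ultimately have finR: "finite R" by (meson finite_imageI finite_subset)
  obtain \<iota> where \<iota>: "bij_betw \<iota> R {0..<card R}" using ex_bij_betw_finite_nat[OF finR] by blast
  define g where "g x = (if x \<in> cube E k \<and> maxc (U A x) < minc x then \<iota> (U A x) else c)" for x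
  have glt: "\<forall>x. g x < c + 1"
  proof
    fix x
    show "g x < c + 1"
    proof (cases "x \<in> cube E k \<and> maxc (U A x) < minc x")
      case True
      then have "U A x \<in> R" unfolding R_def regressive_values_def by auto
      then have "\<iota> (U A x) < card R" using bij_betw_apply[OF \<iota>] by auto
      then show ?thesis using True AE(6) R_def g_def by auto
    qed (auto simp add: g_def)
  qed
  obtain H where H: "H \<subseteq> E" "card H = p"
      "\<forall>rp\<in>P. \<exists>col. \<forall>S\<in>nsets H (fst rp). g (inst S (snd rp)) = col"
    using N[rule_format, of E g] AE(3,4) glt by auto
  have finH: "finite H" using H(1) AE(3) finite_subset by blast
  have cubeHE: "cube H k \<subseteq> cube E k" using H(1) unfolding cube_def by auto
  define R' where "R' = regressive_values (U A) (cube H k)"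
  have R'R: "R' \<subseteq> R" unfolding R'_def R_def regressive_values_def using cubeHE by auto
  define rel where "rel = {(x, y). x \<in> tuples k \<and> y \<in> tuples k \<and> same_ot k x y}"
  define w where "w y = (SOME x. x \<in> cube H k \<and> y = U A x \<and> maxc y < minc x)" for y
  have w: "w y \<in> cube H k \<and> y = U A (w y) \<and> maxc y < minc (w y)" if "y \<in> R'" for y
  proof -
    have "\<exists>x. x \<in> cube H k \<and> y = U A x \<and> maxc y < minc x"
      using that unfolding R'_def regressive_values_def by auto
    then show ?thesis unfolding w_def by (rule someI_ex)
  qed
  define \<Phi> where "\<Phi> y = rel `` {w y}" for y
  have cube_tup: "cube H k \<subseteq> tuples k" unfolding cube_def tuples_def by auto
  have img: "\<Phi> ` R' \<subseteq> tuples k // rel"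
    using w cube_tup unfolding \<Phi>_def by (auto intro: quotientI)
  have inj: "inj_on \<Phi> R'"
  proof (rule inj_onI)
    fix y y' assume y: "y \<in> R'" and y': "y' \<in> R'" and eq: "\<Phi> y = \<Phi> y'"
    define x where "x = w y"
    define x' where "x' = w y'"
    have xH: "x \<in> cube H k" and yx: "y = U A x" "maxc y < minc x" using w[OF y] x_def by auto
    have xH': "x' \<in> cube H k" and yx': "y' = U A x'" "maxc y' < minc x'" using w[OF y'] x'_def by auto
    have lx: "length x = k" "set x \<subseteq> H" using xH unfolding cube_def by auto
    have lx': "length x' = k" "set x' \<subseteq> H" using xH' unfolding cube_def by auto
    have "(x', x') \<in> rel" using lx' unfolding rel_def tuples_def same_ot_def by auto
    then have "x' \<in> \<Phi> y" using eq x'_def unfolding \<Phi>_def by auto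
    then have "(x, x') \<in> rel" using x_def unfolding \<Phi>_def by auto
    then have so: "same_ot k x x'" unfolding rel_def by auto
    define S where "S = set x"
    define \<pi> where "\<pi> = map (rnk S) x"
    have op: "card (set x') = card S \<and> map (rnk (set x')) x' = \<pi>"
      using ot_pat[OF lx(1) lx'(1) so] S_def \<pi>_def by simp
    have "(card S, \<pi>) \<in> P"
      unfolding P_def using lx(1) rnk_lt[of S] S_def \<pi>_def card_length[of x] by auto
    then obtain col where col: "\<forall>S0\<in>nsets H (card S). g (inst S0 \<pi>) = col"
      using H(3) by fastforce
    have "S \<in> nsets H (card S)" using lx S_def unfolding nsets_def by auto
    then have g1: "g x = col" using col inst_pat[of x] S_def \<pi>_def by auto
    have "set x' \<in> nsets H (card S)" using lx' op unfolding nsets_def by auto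
    then have "g x' = col" using col inst_pat[of x'] op by auto
    with g1 have "g x = g x'" by simp
    moreover have "x \<in> cube E k" "x' \<in> cube E k" using xH xH' cubeHE by auto
    ultimately have "\<iota> y = \<iota> y'" using yx yx' unfolding g_def by auto
    moreover have "y \<in> R" "y' \<in> R" using y y' R'R by auto
    ultimately show "y = y'" using \<iota> unfolding bij_betw_def inj_on_def by blast
  qed
  have finQ: "finite (tuples k // rel)"
  proof -
    define T where "T = {xs. set xs \<subseteq> {..<k} \<and> length xs = k}"
    have "finite T" unfolding T_def using finite_lists_length_eq[of "{..<k}" k] by simp
    moreover have "tuples k // rel \<subseteq> (\<lambda>x. rel `` {x}) ` T"
    proof
      fix Q assume "Q \<in> tuples k // rel"
      then obtain x where x: "x \<in> tuples k" "Q = rel `` {x}" unfolding quotient_def by blast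
      define z where "z = map (rnk (set x)) x"
      have lx: "length x = k" using x unfolding tuples_def by simp
      have sz: "same_ot k x z" using same_pat[OF lx] z_def by simp
      have zT: "z \<in> T" unfolding T_def z_def using lx rnk_lt[of "set x"] card_length[of x] by fastforce
      have lz: "z \<in> tuples k" using lx z_def unfolding tuples_def by simp
      have "rel `` {x} = rel `` {z}"
        using sz x(1) lz unfolding rel_def same_ot_def by auto
      then show "Q \<in> (\<lambda>x. rel `` {x}) ` T" using x zT by blast
    qed
    ultimately show ?thesis using finite_subset by blast
  qed
  have "card R' \<le> card (tuples k // rel)"
    using card_inj_on_le[OF inj img finQ] .
  then have cR: "card R' \<le> ot k" unfolding ot_def rel_def by simp
  have cHA: "cube H k \<subseteq> A" using cubeHE AE(5) by (rule subset_trans)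
  show "\<exists>A E. finite A \<and> A \<subseteq> tuples k \<and> finite E \<and> card E = p \<and>
           cube E k \<subseteq> A \<and> card (regressive_values (U A) (cube E k)) \<le> ot k"
    apply (rule exI[of _ A], rule exI[of _ H])
    using AE(1,2) H(2) finH cHA cR unfolding R'_def by simp
qed

end
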